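(* Let $\mathcal{V}\subseteq\mathbb{R}^D$ be compact, $u\in\mathcal{U}$ fixed, and suppose $f(u,\cdot)$ is continuous and $l$-Lipschitz on $\mathcal{V}$ ($l>0$). Assume $R(u)$ and $S(u)$ are both finite. Let $\zeta=\phi(u)-\max_{v\in S(u)\setminus R(u)}f(u,v)$ (with $\zeta=\infty$ if $S(u)=R(u)$). Let $\epsilon\ge0$ with $\epsilon<\zeta$, let $A\subseteq\mathcal{V}$ be finite, and let $\delta\ge0$ with $\delta<\tfrac12(\zeta-\epsilon)/l$. If $d_H(R(u),A)\le\delta$ and $d_H(A,S(u))\le\delta$, then for each $v'\in R^\epsilon_A(u)$ there is $v\in R(u)$ with $\|v-v'\|\le\delta$.
   Context: Definitions: $\phi(u)=\max_{v\in\mathcal{V}} f(u,v)$, $R(u)=\{v\in\mathcal{V}: f(u,v)=\phi(u)\}$. $S(u)$ is the set of local maximum points of $f(u,\cdot)$: $S(u)=\{v_0\in\mathcal{V}:\exists r>0,\ \forall v\in\mathcal{V},\ \|v_0-v\|\le r\Rightarrow f(u,v_0)\ge f(u,v)\}$ (so $R(u)\subseteq S(u)$). For finite $A\subseteq\mathcal{V}$: $\phi_A(u)=\max_{v\in A}f(u,v)$ and $R^\epsilon_A(u)=\{v\in A:\phi_A(u)-f(u,v)\le\epsilon\}$. For sets $X,Y$, $d_H(X,Y)=\max_{x\in X}\min_{y\in Y}\|x-y\|$. *)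

theory Defs
  imports "HOL-Analysis.Analysis"
begin

definition phi :: "('u \<Rightarrow> 'v \<Rightarrow> real) \<Rightarrow> 'v set \<Rightarrow> 'u \<Rightarrow> real" where
  "phi f V u = (SUP v\<in>V. f u v)"

definition Rset :: "('u \<Rightarrow> 'v \<Rightarrow> real) \<Rightarrow> 'v set \<Rightarrow> 'u \<Rightarrow> 'v set" where
  "Rset f V u = {v \<in> V. f u v = phi f V u}"

definition Sset :: "('u \<Rightarrow> 'v::real_normed_vector \<Rightarrow> real) \<Rightarrow> 'v set \<Rightarrow> 'u \<Rightarrow> 'v set" where
  "Sset f V u = {v0 \<in> V. \<exists>r>0. \<forall>v\<in>V. norm (v0 - v) \<le> r \<longrightarrow> f u v0 \<ge> f u v}"

definition phiA :: "('u \<Rightarrow> 'v \<Rightarrow> real) \<Rightarrow> 'v set \<Rightarrow> 'u \<Rightarrow> real" where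
  "phiA f A u = Max ((\<lambda>v. f u v) ` A)"

definition RepsA :: "('u \<Rightarrow> 'v \<Rightarrow> real) \<Rightarrow> real \<Rightarrow> 'v set \<Rightarrow> 'u \<Rightarrow> 'v set" where
  "RepsA f eps A u = {v \<in> A. phiA f A u - f u v \<le> eps}"

text \<open>Directed Hausdorff distance, max over X of min over Y, in ereal
  (the inf over an empty Y is +infinity, the sup over an empty X is -infinity).\<close>
definition dH :: "'v::metric_space set \<Rightarrow> 'v set \<Rightarrow> ereal" where
  "dH X Y = (SUP x\<in>X. INF y\<in>Y. ereal (dist x y))"

definition zeta :: "('u \<Rightarrow> 'v::real_normed_vector \<Rightarrow> real) \<Rightarrow> 'v set \<Rightarrow> 'u \<Rightarrow> ereal" where
  "zeta f V u = (if Sset f V u - Rset f V u = {} then \<infinity>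
      else ereal (phi f V u - Max ((\<lambda>v. f u v) ` (Sset f V u - Rset f V u))))"

end

theory Submission
  imports Defs
begin

lemma inf_attained:
  fixes g :: "'a \<Rightarrow> ereal"
  assumes "finite S" "S \<noteq> {}"
  obtains y where "y \<in> S" "(INF y\<in>S. g y) = g y"
proof -
  have "(INF y\<in>S. g y) = Min (g ` S)" using assms by (simp add: cInf_eq_Min)
  moreover have "Min (g ` S) \<in> g ` S" using assms by (intro Min_in) auto
  ultimately show ?thesis using that by auto
qed

theorem mainTheorem3:
  fixes f :: "'u \<Rightarrow> 'a::euclidean_space \<Rightarrow> real"
    and V :: "'a set" and U :: "'u set" and u :: 'u
    and l eps delta :: real and A :: "'a set"
  assumes "compact V" and "V \<noteq> {}" and "u \<in> U"
    and "continuous_on V (f u)"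
    and "l > 0" and "l-lipschitz_on V (f u)"
    and "finite (Rset f V u)" and "finite (Sset f V u)"
    and "eps \<ge> 0" and "ereal eps < zeta f V u"
    and "finite A" and "A \<subseteq> V"
    and "delta \<ge> 0"
    and "ereal delta < (zeta f V u - ereal eps) / ereal (2 * l)"
    and "dH (Rset f V u) A \<le> ereal delta"
    and "dH A (Sset f V u) \<le> ereal delta"
  shows "\<forall>v'\<in>RepsA f eps A u. \<exists>v\<in>Rset f V u. norm (v - v') \<le> delta"
proof
  fix v' assume v'R: "v' \<in> RepsA f eps A u"
  hence v'A: "v' \<in> A" and v'eps: "phiA f A u - f u v' \<le> eps" by (auto simp: RepsA_def)
  let ?S = "Sset f V u" and ?R = "Rset f V u"
  have lip: "\<And>x y. x \<in> V \<Longrightarrow> y \<in> V \<Longrightarrow> \<bar>f u x - f u y\<bar> \<le> l * dist x y"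
    using assms(6) by (metis dist_real_def lipschitz_onD)
  obtain vm where vm: "vm \<in> V" "\<And>y. y \<in> V \<Longrightarrow> f u y \<le> f u vm"
    using continuous_attains_sup[OF assms(1,2,4)] by blast
  have phi: "phi f V u = f u vm"
    unfolding phi_def
  proof (rule antisym)
    show "(SUP v\<in>V. f u v) \<le> f u vm" using vm assms(2) by (intro cSUP_least) auto
    have "bdd_above (f u ` V)" using vm by (intro bdd_aboveI2[where M="f u vm"]) auto
    thus "f u vm \<le> (SUP v\<in>V. f u v)" using vm(1) by (intro cSUP_upper)
  qed
  have vmR: "vm \<in> ?R" using vm phi by (simp add: Rset_def)
  have "(INF y\<in>?S. ereal (dist v' y)) \<le> dH A ?S"
    unfolding dH_def using v'A by (rule SUP_upper)
  hence infS: "(INF y\<in>?S. ereal (dist v' y)) \<le> ereal delta" using assms(16) by simp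
  have Sne: "?S \<noteq> {}"
  proof
    assume "?S = {}" thus False using infS by (simp add: top_ereal_def)
  qed
  obtain s where s: "s \<in> ?S" "(INF y\<in>?S. ereal (dist v' y)) = ereal (dist v' s)"
    using inf_attained[OF assms(8) Sne] by blast
  have ds: "dist v' s \<le> delta" using infS s by simp
  show "\<exists>v\<in>?R. norm (v - v') \<le> delta"
  proof (cases "s \<in> ?R")
    case True thus ?thesis using ds by (metis dist_commute dist_norm)
  next
    case False
    hence sSR: "s \<in> ?S - ?R" using s by auto
    define M where "M = Max ((\<lambda>v. f u v) ` (?S - ?R))"
    have zeta: "zeta f V u = ereal (phi f V u - M)" using sSR by (auto simp: zeta_def M_def)
    have fsM: "f u s \<le> M" unfolding M_def using sSR assms(8) by (intro Max_ge) auto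
    have "delta < (phi f V u - M - eps) / (2 * l)"
      using assms(14) zeta assms(5) by simp
    hence key: "2 * l * delta < phi f V u - M - eps" using assms(5) by (simp add: field_simps)
    have "(INF y\<in>A. ereal (dist vm y)) \<le> dH ?R A"
      unfolding dH_def using vmR by (rule SUP_upper)
    hence infA: "(INF y\<in>A. ereal (dist vm y)) \<le> ereal delta" using assms(15) by simp
    have Ane: "A \<noteq> {}" using v'A by auto
    obtain a where a: "a \<in> A" "(INF y\<in>A. ereal (dist vm y)) = ereal (dist vm a)"
      using inf_attained[OF assms(11) Ane] by blast
    have da: "dist vm a \<le> delta" using infA a by simp
    have aV: "a \<in> V" using a assms(12) by auto
    have sV: "s \<in> V" using s by (simp add: Sset_def)
    have v'V: "v' \<in> V" using v'A assms(12) by auto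
    have "f u a \<ge> f u vm - l * delta"
      using lip[OF vm(1) aV] da assms(5) mult_left_mono[OF da, of l] by linarith
    moreover have "phiA f A u \<ge> f u a" unfolding phiA_def using a assms(11) by (intro Max_ge) auto
    moreover have "f u s \<ge> f u v' - l * delta"
      using lip[OF v'V sV] ds assms(5) mult_left_mono[OF ds, of l] by linarith
    ultimately have "f u s \<ge> phi f V u - 2 * l * delta - eps" using v'eps phi by linarith
    with key fsM have False by linarith
    thus ?thesis ..
  qed
qed

end
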